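(* Let $B$ be a non-abelian group, $H$ a finitely generated infinite group with fixed finite generating set $X=\{x_1,\dots,x_n\}$, $W=B\wr H$, and fix $a,b\in B$ with $ab\ne ba$. For $S\subseteq H$ define $\bar a,\bar b_S\in B^H$ by $\bar a(1)=a$, $\bar a(x)=1$ for $x\neq1$, and $\bar b_S(x)=b$ for $x\in S$, $\bar b_S(x)=1$ for $x\notin S$; let $G_S\le W$ be generated by $H,\bar a,\bar b_S$ and $Y_S=(x_1,\dots,x_n,\bar a,\bar b_S)$. Let $\xi:2^H\to\mathcal G$, $\xi(S)=(G_S,Y_S)$. Then the restriction of $\xi$ to the subspace $D_R(H)$ of $2^H$ is continuous.
   Context: $B^H$ is the group of all functions $H\to B$ with pointwise multiplication; $B\wr H=B^H\rtimes H$ with $(hfh^{-1})(x)=f(h^{-1}x)$. $2^H$ is the space of all subsets of $H$ with the product topology; $D_R(H)$ is the set of $S\subseteq H$ whose orbit $\{Sh:h\in H\}$ under right multiplication is dense in $2^H$. Space of marked groups: for $m\in\mathbb N$, $\mathcal G_m$ is the set of pairs $(G,A)$, $G$ a group and $A=(a_1,\dots,a_m)$ an ordered generating tuple, modulo $(G,(a_i))\approx(G',(a'_i))$ iff $a_i\mapsto a'_i$ extends to an isomorphism. $(G,A)\approx_r(G',A')$ means there is a labeled directed graph isomorphism between the radius-$r$ balls about the identity in the Cayley graphs, sending $a_i$-edges to $a'_i$-edges. The topology on $\mathcal G_m$ has basis $\{(G',A')\in\mathcal G_m:(G',A')\approx_r(G,A)\}$, $r\in\mathbb N$; $\mathcal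 G_m\subseteq\mathcal G_{m+1}$ via $(G,(a_1,\dots,a_m))\mapsto(G,(a_1,\dots,a_m,1))$, and $\mathcal G=\bigcup_m\mathcal G_m$ carries the union topology. *)

theory Defs
  imports "HOL-Algebra.Algebra" "HOL-Library.FuncSet"
begin

text \<open>The product is (f,h)(g,k) = (f * (h.g), hk) with (h.g)(x) = g(h^-1 x),
  i.e. the conjugation action h f h^-1 (x) = f(h^-1 x).\<close>

definition wreath :: "('b, 'c) monoid_scheme \<Rightarrow> ('h, 'd) monoid_scheme \<Rightarrow> (('h \<Rightarrow> 'b) \<times> 'h) monoid"
  where "wreath B H =
    \<lparr> carrier = (carrier H \<rightarrow>\<^sub>E carrier B) \<times> carrier H,
      monoid.mult = (\<lambda>(f, h) (g, k). (\<lambda>x\<in>carrier H. f x \<otimes>\<^bsub>B\<^esub> g (inv\<^bsub>H\<^esub> h \<otimes>\<^bsub>H\<^esub> x), h \<otimes>\<^bsub>H\<^esub> k)),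
      monoid.one = (\<lambda>x\<in>carrier H. \<one>\<^bsub>B\<^esub>, \<one>\<^bsub>H\<^esub>) \<rparr>"

definition wr_emb :: "('b, 'c) monoid_scheme \<Rightarrow> ('h, 'd) monoid_scheme \<Rightarrow> 'h \<Rightarrow> ('h \<Rightarrow> 'b) \<times> 'h"
  where "wr_emb B H h = (\<lambda>x\<in>carrier H. \<one>\<^bsub>B\<^esub>, h)"

definition abar :: "('b, 'c) monoid_scheme \<Rightarrow> ('h, 'd) monoid_scheme \<Rightarrow> 'b \<Rightarrow> ('h \<Rightarrow> 'b) \<times> 'h"
  where "abar B H a = (\<lambda>x\<in>carrier H. if x = \<one>\<^bsub>H\<^esub> then a else \<one>\<^bsub>B\<^esub>, \<one>\<^bsub>H\<^esub>)"

definition bbar :: "('b, 'c) monoid_scheme \<Rightarrow> ('h, 'd) monoid_scheme \<Rightarrow> 'b \<Rightarrow> 'h set \<Rightarrow> ('h \<Rightarrow> 'b) \<times> 'h"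
  where "bbar B H b S = (\<lambda>x\<in>carrier H. if x \<in> S then b else \<one>\<^bsub>B\<^esub>, \<one>\<^bsub>H\<^esub>)"

definition Gsub :: "('b, 'c) monoid_scheme \<Rightarrow> ('h, 'd) monoid_scheme \<Rightarrow> 'b \<Rightarrow> 'b \<Rightarrow> 'h set
    \<Rightarrow> (('h \<Rightarrow> 'b) \<times> 'h) monoid"
  where "Gsub B H a b S = (wreath B H)\<lparr> carrier :=
     generate (wreath B H) (wr_emb B H ` carrier H \<union> {abar B H a, bbar B H b S}) \<rparr>"

definition Ymark :: "('b, 'c) monoid_scheme \<Rightarrow> ('h, 'd) monoid_scheme \<Rightarrow> 'h list \<Rightarrow> 'b \<Rightarrow> 'b \<Rightarrow> 'h set
    \<Rightarrow> (('h \<Rightarrow> 'b) \<times> 'h) list"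
  where "Ymark B H xs a b S = map (wr_emb B H) xs @ [abar B H a, bbar B H b S]"

fun cayley_ball :: "('g, 'e) monoid_scheme \<Rightarrow> 'g list \<Rightarrow> nat \<Rightarrow> 'g set" where
  "cayley_ball G A 0 = {\<one>\<^bsub>G\<^esub>}"
| "cayley_ball G A (Suc r) = cayley_ball G A r \<union>
     {u \<otimes>\<^bsub>G\<^esub> s | u s. u \<in> cayley_ball G A r \<and> (s \<in> set A \<or> s \<in> m_inv G ` set A)}"

definition marked_ball_iso ::
  "('g, 'e) monoid_scheme \<Rightarrow> 'g list \<Rightarrow> ('k, 'l) monoid_scheme \<Rightarrow> 'k list \<Rightarrow> nat \<Rightarrow> bool"
  where "marked_ball_iso G A G' A' r \<longleftrightarrow>
     length A = length A' \<and>
     (\<exists>\<phi>. bij_betw \<phi> (cayley_ball G A r) (cayley_ball G' A' r) \<and>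
          \<phi> \<one>\<^bsub>G\<^esub> = \<one>\<^bsub>G'\<^esub> \<and>
          (\<forall>u\<in>cayley_ball G A r. \<forall>v\<in>cayley_ball G A r. \<forall>i<length A.
              v = u \<otimes>\<^bsub>G\<^esub> (A ! i) \<longleftrightarrow> \<phi> v = \<phi> u \<otimes>\<^bsub>G'\<^esub> (A' ! i)))"

text \<open>2^H carries the product topology; the basic open sets are
  {S'. S' \<inter> F = T \<inter> F} for finite F \<subseteq> H.  S \<in> D_R(H) iff the orbit {Sh} meets every
  nonempty basic open set.\<close>
definition D_R :: "('h, 'd) monoid_scheme \<Rightarrow> 'h set set" where
  "D_R H = {S. S \<subseteq> carrier H \<and>
     (\<forall>T F. T \<subseteq> carrier H \<longrightarrow> finite F \<longrightarrow> F \<subseteq> carrier H \<longrightarrow>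
        (\<exists>h\<in>carrier H. (S #>\<^bsub>H\<^esub> h) \<inter> F = T \<inter> F))}"

end

theory Submission
  imports Defs
begin


definition ev :: "('g, 'e) monoid_scheme \<Rightarrow> 'g list \<Rightarrow> (nat \<times> bool) list \<Rightarrow> 'g" where
  "ev G A w = foldl (\<lambda>u (i,e). u \<otimes>\<^bsub>G\<^esub> (if e then A!i else inv\<^bsub>G\<^esub> (A!i))) \<one>\<^bsub>G\<^esub> w"

definition words :: "nat \<Rightarrow> nat \<Rightarrow> (nat \<times> bool) list set" where
  "words n r = {w. length w \<le> r \<and> (\<forall>l\<in>set w. fst l < n)}"

lemma ev_Nil[simp]: "ev G A [] = \<one>\<^bsub>G\<^esub>" by (simp add: ev_def)
lemma ev_snoc[simp]: "ev G A (w @ [(i,e)]) = ev G A w \<otimes>\<^bsub>G\<^esub> (if e then A!i else inv\<^bsub>G\<^esub> (A!i))"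
  by (simp add: ev_def)

lemma ball_eq: "cayley_ball G A r = ev G A ` words (length A) r"
proof (induction r)
  case 0
  then show ?case by (auto simp: words_def)
next
  case (Suc r)
  show ?case
  proof
    show "cayley_ball G A (Suc r) \<subseteq> ev G A ` words (length A) (Suc r)"
    proof
      fix x assume "x \<in> cayley_ball G A (Suc r)"
      then consider "x \<in> cayley_ball G A r" | u s where "x = u \<otimes>\<^bsub>G\<^esub> s" "u \<in> cayley_ball G A r"
          "s \<in> set A \<or> s \<in> m_inv G ` set A" by auto
      then show "x \<in> ev G A ` words (length A) (Suc r)"
      proof cases
        case 1 then show ?thesis using Suc by (auto simp: words_def)
      next
        case 2
        then obtain w where w: "w \<in> words (length A) r" "u = ev G A w" using Suc by auto
        from 2(3) obtain i e where ie: "i < length A" "s = (if e then A!i else inv\<^bsub>G\<^esub> (A!i))"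
          by (metis imageE in_set_conv_nth)
        have "x = ev G A (w @ [(i,e)])" using 2 w ie by simp
        moreover have "w @ [(i,e)] \<in> words (length A) (Suc r)" using w ie by (auto simp: words_def)
        ultimately show ?thesis by blast
      qed
    qed
  next
    show "ev G A ` words (length A) (Suc r) \<subseteq> cayley_ball G A (Suc r)"
    proof
      fix x assume "x \<in> ev G A ` words (length A) (Suc r)"
      then obtain w where w: "w \<in> words (length A) (Suc r)" "x = ev G A w" by auto
      show "x \<in> cayley_ball G A (Suc r)"
      proof (cases "length w \<le> r")
        case True
        then have "w \<in> words (length A) r" using w by (auto simp: words_def)
        then show ?thesis using Suc w by auto
      next
        case False
        then obtain v i e where v: "w = v @ [(i,e)]" using w
          by (metis le0 length_0_conv prod.collapse rev_exhaust)
        have "v \<in> words (length A) r" "i < length A" using w v False by (auto simp: words_def)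
        then have "ev G A v \<in> cayley_ball G A r" using Suc by auto
        moreover have "(if e then A!i else inv\<^bsub>G\<^esub> (A!i)) \<in> set A \<or> (if e then A!i else inv\<^bsub>G\<^esub> (A!i)) \<in> m_inv G ` set A"
          using \<open>i < length A\<close> by auto
        ultimately have "ev G A v \<otimes>\<^bsub>G\<^esub> (if e then A!i else inv\<^bsub>G\<^esub> (A!i)) \<in> cayley_ball G A (Suc r)"
          unfolding cayley_ball.simps by blast
        then show ?thesis using w v by simp
      qed
    qed
  qed
qed

lemma iso_from_words:
  assumes len: "length A1 = length A2"
    and K: "\<And>w1 w2. w1 \<in> words (length A1) (Suc r) \<Longrightarrow> w2 \<in> words (length A1) (Suc r) \<Longrightarrow>
        ev G1 A1 w1 = ev G1 A1 w2 \<longleftrightarrow> ev G2 A2 w1 = ev G2 A2 w2"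
  shows "marked_ball_iso G1 A1 G2 A2 r"
proof -
  let ?n = "length A1"
  have wsub: "words ?n r \<subseteq> words ?n (Suc r)" by (auto simp: words_def)
  define sw where "sw u = (SOME w. w \<in> words ?n r \<and> ev G1 A1 w = u)" for u
  define \<phi> where "\<phi> u = ev G2 A2 (sw u)" for u
  have phi: "\<phi> (ev G1 A1 w) = ev G2 A2 w" if "w \<in> words ?n r" for w
  proof -
    have "sw (ev G1 A1 w) \<in> words ?n r \<and> ev G1 A1 (sw (ev G1 A1 w)) = ev G1 A1 w"
      unfolding sw_def by (rule someI[of _ w]) (use that in auto)
    then show ?thesis unfolding \<phi>_def using K[of "sw (ev G1 A1 w)" w] that wsub by blast
  qed
  have b1: "cayley_ball G1 A1 r = ev G1 A1 ` words ?n r" by (rule ball_eq)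
  have b2: "cayley_ball G2 A2 r = ev G2 A2 ` words ?n r" using len ball_eq by metis
  have "bij_betw \<phi> (cayley_ball G1 A1 r) (cayley_ball G2 A2 r)"
  proof (rule bij_betw_imageI)
    show "inj_on \<phi> (cayley_ball G1 A1 r)"
    proof (rule inj_onI)
      fix u v assume "u \<in> cayley_ball G1 A1 r" "v \<in> cayley_ball G1 A1 r" "\<phi> u = \<phi> v"
      then obtain w1 w2 where "w1 \<in> words ?n r" "w2 \<in> words ?n r" "u = ev G1 A1 w1" "v = ev G1 A1 w2"
        using b1 by auto
      then show "u = v" using \<open>\<phi> u = \<phi> v\<close> phi K[of w1 w2] wsub by auto
    qed
    show "\<phi> ` cayley_ball G1 A1 r = cayley_ball G2 A2 r"
      unfolding b1 b2 image_image using phi by (auto intro!: image_cong)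
  qed
  moreover have "\<phi> \<one>\<^bsub>G1\<^esub> = \<one>\<^bsub>G2\<^esub>"
    using phi[of "[]"] by (simp add: words_def)
  moreover have "\<forall>u\<in>cayley_ball G1 A1 r. \<forall>v\<in>cayley_ball G1 A1 r. \<forall>i<length A1.
              v = u \<otimes>\<^bsub>G1\<^esub> (A1 ! i) \<longleftrightarrow> \<phi> v = \<phi> u \<otimes>\<^bsub>G2\<^esub> (A2 ! i)"
  proof (intro ballI allI impI)
    fix u v i assume "u \<in> cayley_ball G1 A1 r" "v \<in> cayley_ball G1 A1 r" "i < length A1"
    then obtain w1 w2 where w: "w1 \<in> words ?n r" "w2 \<in> words ?n r" "u = ev G1 A1 w1" "v = ev G1 A1 w2"
      using b1 by auto
    have ws: "w1 @ [(i,True)] \<in> words ?n (Suc r)" "w2 \<in> words ?n (Suc r)"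
      using w \<open>i < length A1\<close> wsub by (auto simp: words_def)
    show "v = u \<otimes>\<^bsub>G1\<^esub> (A1 ! i) \<longleftrightarrow> \<phi> v = \<phi> u \<otimes>\<^bsub>G2\<^esub> (A2 ! i)"
      using K[OF ws(2) ws(1)] w phi by simp
  qed
  ultimately show ?thesis unfolding marked_ball_iso_def using len by blast
qed




lemma (in group) rcos_mem:
  assumes "S \<subseteq> carrier G" "q \<in> carrier G" "h \<in> carrier G"
  shows "q \<in> S #> h \<longleftrightarrow> q \<otimes> inv h \<in> S"
proof
  assume "q \<in> S #> h"
  then obtain s where "s \<in> S" "q = s \<otimes> h" by (auto simp: r_coset_def)
  then show "q \<otimes> inv h \<in> S" using assms by (simp add: m_assoc subsetD)
next
  assume "q \<otimes> inv h \<in> S"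
  moreover have "q = (q \<otimes> inv h) \<otimes> h" using assms by (simp add: m_assoc)
  ultimately show "q \<in> S #> h" by (auto simp: r_coset_def)
qed

lemma (in group) DR_avoid:
  assumes S: "S \<in> D_R G" and inf: "infinite (carrier G)"
    and T: "T \<subseteq> carrier G" and F: "finite F" "F \<subseteq> carrier G" and K: "finite K"
  shows "\<exists>h\<in>carrier G. h \<notin> K \<and> (S #> h) \<inter> F = T \<inter> F"
proof -
  let ?m = "card K"
  have "infinite (carrier G - F)" using inf F by auto
  then obtain E where E: "finite E" "card E = ?m" "E \<subseteq> carrier G - F"
    using infinite_arbitrarily_large by blast
  have ex: "\<exists>h\<in>carrier G. (S #> h) \<inter> (F \<union> E) = ((T \<inter> F) \<union> U) \<inter> (F \<union> E)" if "U \<subseteq> E" for U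
  proof -
    have all: "\<forall>T F. T \<subseteq> carrier G \<longrightarrow> finite F \<longrightarrow> F \<subseteq> carrier G \<longrightarrow>
        (\<exists>h\<in>carrier G. (S #> h) \<inter> F = T \<inter> F)" using S unfolding D_R_def by blast
    have "(T \<inter> F) \<union> U \<subseteq> carrier G" "finite (F \<union> E)" "F \<union> E \<subseteq> carrier G"
      using that E F T by auto
    then show ?thesis using all by blast
  qed
  define hU where "hU U = (SOME h. h \<in> carrier G \<and> (S #> h) \<inter> (F \<union> E) = ((T \<inter> F) \<union> U) \<inter> (F \<union> E))" for U
  have hU: "hU U \<in> carrier G \<and> (S #> hU U) \<inter> (F \<union> E) = ((T \<inter> F) \<union> U) \<inter> (F \<union> E)" if "U \<subseteq> E" for U
    unfolding hU_def using someI_ex[OF ex[OF that, unfolded Bex_def]] .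
  have hE: "(S #> hU U) \<inter> E = U" if "U \<subseteq> E" for U
  proof -
    have "(S #> hU U) \<inter> E = ((S #> hU U) \<inter> (F \<union> E)) \<inter> E" by blast
    also have "\<dots> = (((T \<inter> F) \<union> U) \<inter> (F \<union> E)) \<inter> E" using hU[OF that] by simp
    also have "\<dots> = U" using that E by blast
    finally show ?thesis .
  qed
  have inj: "inj_on hU (Pow E)"
  proof (rule inj_onI)
    fix U V assume "U \<in> Pow E" "V \<in> Pow E" "hU U = hU V"
    then have "(S #> hU U) \<inter> E = (S #> hU V) \<inter> E" by simp
    then show "U = V" using hE \<open>U \<in> Pow E\<close> \<open>V \<in> Pow E\<close> by simp
  qed
  have "card (hU ` Pow E) = 2 ^ ?m" using card_image[OF inj] E by (simp add: card_Pow)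
  moreover have "?m < 2 ^ ?m" by (rule less_exp)
  ultimately have "\<not> hU ` Pow E \<subseteq> K"
  proof -
    assume c: "card (hU ` Pow E) = 2 ^ ?m" "?m < 2 ^ ?m"
    show ?thesis
    proof
      assume "hU ` Pow E \<subseteq> K"
      then have "card (hU ` Pow E) \<le> ?m" using K by (rule card_mono[rotated])
      then show False using c by simp
    qed
  qed
  then obtain U where U: "U \<subseteq> E" "hU U \<notin> K" by auto
  have "(S #> hU U) \<inter> F = ((S #> hU U) \<inter> (F \<union> E)) \<inter> F" by blast
  also have "\<dots> = T \<inter> F" using hU[OF U(1)] U(1) E by blast
  finally have "(S #> hU U) \<inter> F = T \<inter> F" .
  moreover have "hU U \<in> carrier G" using hU[OF U(1)] by simp
  ultimately show ?thesis using U(2) by blast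
qed



locale wr2 = B: group B + H: group H
  for B :: "('b, 'c) monoid_scheme" and H :: "('h, 'd) monoid_scheme"
begin

abbreviation "W \<equiv> wreath B H"

lemma W_carrier: "carrier W = (carrier H \<rightarrow>\<^sub>E carrier B) \<times> carrier H"
  by (simp add: wreath_def)

lemma W_mult: "(f, h) \<otimes>\<^bsub>W\<^esub> (g, k) = (\<lambda>x\<in>carrier H. f x \<otimes>\<^bsub>B\<^esub> g (inv\<^bsub>H\<^esub> h \<otimes>\<^bsub>H\<^esub> x), h \<otimes>\<^bsub>H\<^esub> k)"
  by (simp add: wreath_def)

lemma W_one: "\<one>\<^bsub>W\<^esub> = (\<lambda>x\<in>carrier H. \<one>\<^bsub>B\<^esub>, \<one>\<^bsub>H\<^esub>)"
  by (simp add: wreath_def)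

lemma W_group: "group W"
proof (rule groupI)
  fix x y assume "x \<in> carrier W" "y \<in> carrier W"
  then show "x \<otimes>\<^bsub>W\<^esub> y \<in> carrier W"
    by (cases x; cases y) (auto simp: W_carrier W_mult PiE_def Pi_def)
next
  show "\<one>\<^bsub>W\<^esub> \<in> carrier W" by (auto simp: W_carrier W_one)
next
  fix x y z assume "x \<in> carrier W" "y \<in> carrier W" "z \<in> carrier W"
  then show "x \<otimes>\<^bsub>W\<^esub> y \<otimes>\<^bsub>W\<^esub> z = x \<otimes>\<^bsub>W\<^esub> (y \<otimes>\<^bsub>W\<^esub> z)"
    apply (cases x; cases y; cases z)
    apply (auto simp: W_carrier W_mult PiE_def Pi_def H.m_assoc B.m_assoc H.inv_mult_group intro!: ext)
    done
next
  fix x assume "x \<in> carrier W"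
  then show "\<one>\<^bsub>W\<^esub> \<otimes>\<^bsub>W\<^esub> x = x"
    by (cases x) (auto simp: W_carrier W_mult W_one PiE_def Pi_def extensional_def intro!: ext)
next
  fix x assume "x \<in> carrier W"
  then obtain f h where x: "x = (f, h)" "f \<in> carrier H \<rightarrow>\<^sub>E carrier B" "h \<in> carrier H"
    by (auto simp: W_carrier)
  let ?y = "(\<lambda>x\<in>carrier H. inv\<^bsub>B\<^esub> f (h \<otimes>\<^bsub>H\<^esub> x), inv\<^bsub>H\<^esub> h)"
  have "?y \<in> carrier W \<and> ?y \<otimes>\<^bsub>W\<^esub> x = \<one>\<^bsub>W\<^esub>"
    using x by (auto simp: W_carrier W_mult W_one PiE_def Pi_def intro!: ext)
  then show "\<exists>y\<in>carrier W. y \<otimes>\<^bsub>W\<^esub> x = \<one>\<^bsub>W\<^esub>" by blast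
qed

end

locale wr3 = wr2 B H for B :: "('b, 'c) monoid_scheme" and H :: "('h, 'd) monoid_scheme" +
  fixes xs :: "'h list" and a b :: 'b
  assumes xs: "set xs \<subseteq> carrier H" and a: "a \<in> carrier B" and b: "b \<in> carrier B"
begin

abbreviation "n \<equiv> length xs"
abbreviation "Y S \<equiv> Ymark B H xs a b S"

definition lh :: "nat \<times> bool \<Rightarrow> 'h" where
  "lh l = (if fst l < n then (if snd l then xs ! fst l else inv\<^bsub>H\<^esub> (xs ! fst l)) else \<one>\<^bsub>H\<^esub>)"

definition lf :: "'h set \<Rightarrow> nat \<times> bool \<Rightarrow> 'h \<Rightarrow> 'b" where
  "lf S l y = (if fst l < n then \<one>\<^bsub>B\<^esub>
     else if fst l = n then (if y = \<one>\<^bsub>H\<^esub> then (if snd l then a else inv\<^bsub>B\<^esub> a) else \<one>\<^bsub>B\<^esub>)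
     else (if y \<in> S then (if snd l then b else inv\<^bsub>B\<^esub> b) else \<one>\<^bsub>B\<^esub>))"

definition hpos :: "(nat \<times> bool) list \<Rightarrow> 'h" where
  "hpos w = foldl (\<lambda>p l. p \<otimes>\<^bsub>H\<^esub> lh l) \<one>\<^bsub>H\<^esub> w"

lemma hpos_Nil[simp]: "hpos [] = \<one>\<^bsub>H\<^esub>" by (simp add: hpos_def)
lemma hpos_snoc[simp]: "hpos (w @ [l]) = hpos w \<otimes>\<^bsub>H\<^esub> lh l" by (simp add: hpos_def)

lemma lh_carrier[simp]: "lh l \<in> carrier H"
proof -
  have "xs ! fst l \<in> carrier H" if "fst l < n" using xs nth_mem that by blast
  then show ?thesis unfolding lh_def by simp
qed

lemma lf_carrier[simp]: "lf S l y \<in> carrier B"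
  using a b by (auto simp: lf_def)

lemma hpos_carrier[simp]: "hpos w \<in> carrier H"
  by (induction w rule: rev_induct) auto

lemma Y_len[simp]: "length (Y S) = n + 2" by (simp add: Ymark_def)

lemma Y_nth: "i < n + 2 \<Longrightarrow> Y S ! i = (if i < n then wr_emb B H (xs ! i) else if i = n then abar B H a else bbar B H b S)"
  by (auto simp: Ymark_def nth_append less_Suc_eq)

lemma W_inv_expl:
  assumes "f \<in> carrier H \<rightarrow>\<^sub>E carrier B" "h \<in> carrier H"
  shows "inv\<^bsub>W\<^esub> (f, h) = (\<lambda>x\<in>carrier H. inv\<^bsub>B\<^esub> f (h \<otimes>\<^bsub>H\<^esub> x), inv\<^bsub>H\<^esub> h)"
proof (rule group.inv_equality[OF W_group])
  show "(\<lambda>x\<in>carrier H. inv\<^bsub>B\<^esub> f (h \<otimes>\<^bsub>H\<^esub> x), inv\<^bsub>H\<^esub> h) \<otimes>\<^bsub>W\<^esub> (f, h) = \<one>\<^bsub>W\<^esub>"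
    using assms by (auto simp: W_mult W_one PiE_def Pi_def)
  show "(f, h) \<in> carrier W" using assms by (simp add: W_carrier)
  show "(\<lambda>x\<in>carrier H. inv\<^bsub>B\<^esub> f (h \<otimes>\<^bsub>H\<^esub> x), inv\<^bsub>H\<^esub> h) \<in> carrier W"
    using assms by (auto simp: W_carrier PiE_def Pi_def)
qed

lemma letter:
  assumes "i < n + 2"
  shows "(if e then Y S ! i else inv\<^bsub>W\<^esub> (Y S ! i)) = (\<lambda>y\<in>carrier H. lf S (i,e) y, lh (i,e))"
proof -
  consider "i < n" | "i = n" | "i = n + 1" using assms by linarith
  then show ?thesis
  proof cases
    case 1
    have "xs ! i \<in> carrier H" using xs 1 by auto
    then show ?thesis using 1
      by (auto simp: Y_nth wr_emb_def W_inv_expl lf_def lh_def intro!: ext)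
  next
    case 2
    then show ?thesis using a
      by (auto simp: Y_nth abar_def W_inv_expl lf_def lh_def PiE_def Pi_def intro!: ext)
  next
    case 3
    then show ?thesis using b
      by (auto simp: Y_nth bbar_def W_inv_expl lf_def lh_def PiE_def Pi_def intro!: ext)
  qed
qed

lemma evW:
  assumes "\<forall>l\<in>set w. fst l < n + 2"
  shows "ev W (Y S) w = (fst (ev W (Y S) w), hpos w) \<and> ev W (Y S) w \<in> carrier W"
  using assms
proof (induction w rule: rev_induct)
  case Nil
  have "\<one>\<^bsub>W\<^esub> \<in> carrier W" using monoid.one_closed[OF group.is_monoid[OF W_group]] .
  then have c: "ev W (Y S) [] \<in> carrier W" by (simp only: ev_Nil)
  have e: "ev W (Y S) [] = (\<lambda>x\<in>carrier H. \<one>\<^bsub>B\<^esub>, \<one>\<^bsub>H\<^esub>)" by (simp only: ev_Nil W_one)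
  have "ev W (Y S) [] = (fst (ev W (Y S) []), hpos [])" by (simp only: e fst_conv hpos_Nil)
  then show ?case using c by blast
next
  case (snoc l w)
  obtain i e where l: "l = (i,e)" by fastforce
  have i: "i < n + 2" using snoc.prems l by simp
  have IH: "ev W (Y S) w = (fst (ev W (Y S) w), hpos w) \<and> ev W (Y S) w \<in> carrier W"
    using snoc.IH snoc.prems by simp
  then obtain f where f: "ev W (Y S) w = (f, hpos w)" by blast
  have fc: "f \<in> carrier H \<rightarrow>\<^sub>E carrier B" using IH f by (simp add: W_carrier)
  have "ev W (Y S) (w @ [l]) = (f, hpos w) \<otimes>\<^bsub>W\<^esub> (\<lambda>y\<in>carrier H. lf S (i,e) y, lh (i,e))"
    using f l letter[OF i] by simp
  also have "\<dots> = (\<lambda>x\<in>carrier H. f x \<otimes>\<^bsub>B\<^esub> (\<lambda>y\<in>carrier H. lf S (i,e) y) (inv\<^bsub>H\<^esub> hpos w \<otimes>\<^bsub>H\<^esub> x), hpos w \<otimes>\<^bsub>H\<^esub> lh (i,e))"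
    by (rule W_mult)
  finally have e: "ev W (Y S) (w @ [l]) = (\<lambda>x\<in>carrier H. f x \<otimes>\<^bsub>B\<^esub> (\<lambda>y\<in>carrier H. lf S (i,e) y) (inv\<^bsub>H\<^esub> hpos w \<otimes>\<^bsub>H\<^esub> x), hpos w \<otimes>\<^bsub>H\<^esub> lh (i,e))" .
  have "(\<lambda>x\<in>carrier H. f x \<otimes>\<^bsub>B\<^esub> (\<lambda>y\<in>carrier H. lf S (i,e) y) (inv\<^bsub>H\<^esub> hpos w \<otimes>\<^bsub>H\<^esub> x)) \<in> carrier H \<rightarrow>\<^sub>E carrier B"
    unfolding restrict_PiE_iff using fc PiE_mem by fastforce
  then have 2: "ev W (Y S) (w @ [l]) \<in> carrier W" unfolding e W_carrier by simp
  have 1: "ev W (Y S) (w @ [l]) = (fst (ev W (Y S) (w @ [l])), hpos (w @ [l]))"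
    unfolding e unfolding l hpos_snoc fst_conv by (rule refl)
  show ?case using 1 2 by blast
qed

lemma ev_step:
  assumes "\<forall>l\<in>set w. fst l < n + 2" "fst l < n + 2" "x \<in> carrier H"
  shows "fst (ev W (Y S) (w @ [l])) x = fst (ev W (Y S) w) x \<otimes>\<^bsub>B\<^esub> lf S l (inv\<^bsub>H\<^esub> hpos w \<otimes>\<^bsub>H\<^esub> x)"
proof -
  obtain i e where l: "l = (i,e)" by fastforce
  have i: "i < n + 2" using assms l by simp
  obtain f where f: "ev W (Y S) w = (f, hpos w)" using evW[OF assms(1)] by blast
  have "ev W (Y S) (w @ [l]) = (f, hpos w) \<otimes>\<^bsub>W\<^esub> (\<lambda>y\<in>carrier H. lf S (i,e) y, lh (i,e))"
    using f l letter[OF i] by simp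
  also have "\<dots> = (\<lambda>x\<in>carrier H. f x \<otimes>\<^bsub>B\<^esub> (\<lambda>y\<in>carrier H. lf S (i,e) y) (inv\<^bsub>H\<^esub> hpos w \<otimes>\<^bsub>H\<^esub> x), hpos w \<otimes>\<^bsub>H\<^esub> lh (i,e))"
    by (rule W_mult)
  finally have "fst (ev W (Y S) (w @ [l])) x = f x \<otimes>\<^bsub>B\<^esub> lf S (i,e) (inv\<^bsub>H\<^esub> hpos w \<otimes>\<^bsub>H\<^esub> x)"
    using assms(3) by simp
  then show ?thesis using f l by simp
qed

lemma transfer_L:
  assumes "\<forall>l\<in>set w. fst l < n + 2" "x \<in> carrier H" "x' \<in> carrier H"
    and "\<forall>k\<le>length w. (inv\<^bsub>H\<^esub> hpos (take k w) \<otimes>\<^bsub>H\<^esub> x = \<one>\<^bsub>H\<^esub> \<longleftrightarrow> inv\<^bsub>H\<^esub> hpos (take k w) \<otimes>\<^bsub>H\<^esub> x' = \<one>\<^bsub>H\<^esub>)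
       \<and> (inv\<^bsub>H\<^esub> hpos (take k w) \<otimes>\<^bsub>H\<^esub> x \<in> S \<longleftrightarrow> inv\<^bsub>H\<^esub> hpos (take k w) \<otimes>\<^bsub>H\<^esub> x' \<in> S')"
  shows "fst (ev W (Y S) w) x = fst (ev W (Y S') w) x'"
  using assms
proof (induction w rule: rev_induct)
  case Nil
  then show ?case by (simp add: W_one)
next
  case (snoc l w)
  have P4: "\<forall>k\<le>length w. (inv\<^bsub>H\<^esub> hpos (take k w) \<otimes>\<^bsub>H\<^esub> x = \<one>\<^bsub>H\<^esub> \<longleftrightarrow> inv\<^bsub>H\<^esub> hpos (take k w) \<otimes>\<^bsub>H\<^esub> x' = \<one>\<^bsub>H\<^esub>)
       \<and> (inv\<^bsub>H\<^esub> hpos (take k w) \<otimes>\<^bsub>H\<^esub> x \<in> S \<longleftrightarrow> inv\<^bsub>H\<^esub> hpos (take k w) \<otimes>\<^bsub>H\<^esub> x' \<in> S')"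
    proof (intro allI impI)
      fix k assume "k \<le> length w"
      then show "(inv\<^bsub>H\<^esub> hpos (take k w) \<otimes>\<^bsub>H\<^esub> x = \<one>\<^bsub>H\<^esub> \<longleftrightarrow> inv\<^bsub>H\<^esub> hpos (take k w) \<otimes>\<^bsub>H\<^esub> x' = \<one>\<^bsub>H\<^esub>)
       \<and> (inv\<^bsub>H\<^esub> hpos (take k w) \<otimes>\<^bsub>H\<^esub> x \<in> S \<longleftrightarrow> inv\<^bsub>H\<^esub> hpos (take k w) \<otimes>\<^bsub>H\<^esub> x' \<in> S')"
      proof -
        have "take k (w @ [l]) = take k w" using \<open>k \<le> length w\<close> by simp
        moreover have "k \<le> length (w @ [l])" using \<open>k \<le> length w\<close> by simp
        ultimately show ?thesis using snoc.prems(4) by metis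
      qed
    qed
  have IH: "fst (ev W (Y S) w) x = fst (ev W (Y S') w) x'"
    using snoc.IH snoc.prems P4 by simp
  have c: "(inv\<^bsub>H\<^esub> hpos w \<otimes>\<^bsub>H\<^esub> x = \<one>\<^bsub>H\<^esub> \<longleftrightarrow> inv\<^bsub>H\<^esub> hpos w \<otimes>\<^bsub>H\<^esub> x' = \<one>\<^bsub>H\<^esub>)
       \<and> (inv\<^bsub>H\<^esub> hpos w \<otimes>\<^bsub>H\<^esub> x \<in> S \<longleftrightarrow> inv\<^bsub>H\<^esub> hpos w \<otimes>\<^bsub>H\<^esub> x' \<in> S')"
    using snoc.prems(4)[rule_format, of "length w"] by simp
  have "lf S l (inv\<^bsub>H\<^esub> hpos w \<otimes>\<^bsub>H\<^esub> x) = lf S' l (inv\<^bsub>H\<^esub> hpos w \<otimes>\<^bsub>H\<^esub> x')"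
    using c by (simp add: lf_def)
  then show ?case using snoc.prems IH by (simp add: ev_step)
qed

end



lemma finite_words: "finite (words m N)"
proof -
  have "words m N \<subseteq> {w. set w \<subseteq> {..<m} \<times> (UNIV :: bool set) \<and> length w \<le> N}"
    by (auto simp: words_def)
  moreover have "finite {w. set w \<subseteq> {..<m} \<times> (UNIV :: bool set) \<and> length w \<le> N}"
    by (rule finite_lists_length_le) simp
  ultimately show ?thesis by (rule finite_subset)
qed

lemma take_words: "w \<in> words m N \<Longrightarrow> take k w \<in> words m N"
  by (auto simp: words_def dest: in_set_takeD)

context wr3
begin

definition gens :: "'h set \<Rightarrow> (('h \<Rightarrow> 'b) \<times> 'h) set" where
  "gens S = wr_emb B H ` carrier H \<union> {abar B H a, bbar B H b S}"

lemma gens_carrier: "gens S \<subseteq> carrier W"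
  using a b by (auto simp: gens_def W_carrier wr_emb_def abar_def bbar_def)

lemma Y_gens: "i < n + 2 \<Longrightarrow> Y S ! i \<in> gens S"
proof -
  have "xs ! i \<in> carrier H" if "i < n" using xs nth_mem that by blast
  then show "i < n + 2 \<Longrightarrow> Y S ! i \<in> gens S" by (auto simp: Y_nth gens_def)
qed

lemma Gs: "Gsub B H a b S = W\<lparr>carrier := generate W (gens S)\<rparr>"
  unfolding Gsub_def gens_def by (rule refl)

lemma mG: "monoid.mult (Gsub B H a b S) = monoid.mult W"
  unfolding Gs by simp

lemma oneG: "\<one>\<^bsub>Gsub B H a b S\<^esub> = \<one>\<^bsub>W\<^esub>"
  unfolding Gs by simp

lemma ev_Gsub:
  assumes "\<forall>l\<in>set w. fst l < n + 2"
  shows "ev (Gsub B H a b S) (Y S) w = ev W (Y S) w"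
proof -
  have sg: "subgroup (generate W (gens S)) W"
    by (rule group.generate_is_subgroup[OF W_group gens_carrier])
  have inv: "inv\<^bsub>Gsub B H a b S\<^esub> (Y S ! i) = inv\<^bsub>W\<^esub> (Y S ! i)" if "i < n + 2" for i
  proof -
    have "Y S ! i \<in> generate W (gens S)" using Y_gens[OF that] by (rule generate.incl)
    then show ?thesis unfolding Gs by (rule group.m_inv_consistent[OF W_group sg])
  qed
  show ?thesis unfolding ev_def
  proof (rule foldl_cong)
    fix u l assume "l \<in> set w"
    then have fl: "fst l < n + 2" using assms by blast
    obtain i e where l0: "l = (i,e)" by (cases l)
    have l: "l = (i,e)" "i < n + 2" using l0 fl by simp_all
    show "(case l of (i, e) \<Rightarrow> u \<otimes>\<^bsub>Gsub B H a b S\<^esub> (if e then Y S ! i else inv\<^bsub>Gsub B H a b S\<^esub> (Y S ! i))) =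
          (case l of (i, e) \<Rightarrow> u \<otimes>\<^bsub>W\<^esub> (if e then Y S ! i else inv\<^bsub>W\<^esub> (Y S ! i)))"
      unfolding l(1) prod.case mG inv[OF l(2)] by (rule refl)
  qed (simp_all only: oneG)
qed

definition PP :: "nat \<Rightarrow> 'h set" where "PP N = hpos ` words (n + 2) N"
definition FF :: "nat \<Rightarrow> 'h set" where "FF N = (\<lambda>(p,q). inv\<^bsub>H\<^esub> p \<otimes>\<^bsub>H\<^esub> q) ` (PP N \<times> PP N)"

lemma PP_finite: "finite (PP N)" by (simp add: PP_def finite_words)
lemma PP_carrier: "PP N \<subseteq> carrier H" by (auto simp: PP_def)
lemma FF_finite: "finite (FF N)" by (simp add: FF_def PP_finite)
lemma FF_carrier: "FF N \<subseteq> carrier H" using PP_carrier by (auto simp: FF_def)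

lemma key_point:
  assumes inf: "infinite (carrier H)" and S1: "S1 \<in> D_R H" and S2: "S2 \<in> D_R H"
    and eqF: "S1 \<inter> FF N = S2 \<inter> FF N" and x: "x \<in> carrier H"
  shows "\<exists>x'\<in>carrier H. \<forall>p\<in>PP N. (inv\<^bsub>H\<^esub> p \<otimes>\<^bsub>H\<^esub> x = \<one>\<^bsub>H\<^esub> \<longleftrightarrow> inv\<^bsub>H\<^esub> p \<otimes>\<^bsub>H\<^esub> x' = \<one>\<^bsub>H\<^esub>)
      \<and> (inv\<^bsub>H\<^esub> p \<otimes>\<^bsub>H\<^esub> x \<in> S2 \<longleftrightarrow> inv\<^bsub>H\<^esub> p \<otimes>\<^bsub>H\<^esub> x' \<in> S1)"
proof (cases "x \<in> PP N")
  case True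
  have "inv\<^bsub>H\<^esub> p \<otimes>\<^bsub>H\<^esub> x \<in> FF N" if "p \<in> PP N" for p
    unfolding FF_def by (rule image_eqI[where x="(p,x)"]) (use that True in auto)
  moreover have "z \<in> FF N \<Longrightarrow> (z \<in> S2 \<longleftrightarrow> z \<in> S1)" for z
    using eqF by (metis Int_iff)
  ultimately have "\<forall>p\<in>PP N. (inv\<^bsub>H\<^esub> p \<otimes>\<^bsub>H\<^esub> x \<in> S2 \<longleftrightarrow> inv\<^bsub>H\<^esub> p \<otimes>\<^bsub>H\<^esub> x \<in> S1)"
    by blast
  then show ?thesis using x by blast
next
  case False
  have S1c: "S1 \<subseteq> carrier H" using S1 by (simp add: D_R_def)
  define T where "T = {q \<in> carrier H. q \<otimes>\<^bsub>H\<^esub> x \<in> S2}"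
  have fin: "finite (m_inv H ` PP N)" using PP_finite by simp
  have sub: "m_inv H ` PP N \<subseteq> carrier H" using PP_carrier by auto
  have Tc: "T \<subseteq> carrier H" by (auto simp: T_def)
  from H.DR_avoid[OF S1 inf Tc fin sub fin]
  obtain h where h: "h \<in> carrier H" "h \<notin> m_inv H ` PP N"
     "(S1 #>\<^bsub>H\<^esub> h) \<inter> m_inv H ` PP N = T \<inter> m_inv H ` PP N"
    by blast
  show ?thesis
  proof (intro bexI ballI conjI)
    show "inv\<^bsub>H\<^esub> h \<in> carrier H" using h by simp
    fix p assume p: "p \<in> PP N"
    have pc: "p \<in> carrier H" using p PP_carrier by blast
    have "inv\<^bsub>H\<^esub> p \<otimes>\<^bsub>H\<^esub> x = \<one>\<^bsub>H\<^esub> \<longleftrightarrow> x = p"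
      using H.inv_solve_left'[OF H.one_closed pc x] pc by simp
    then have "inv\<^bsub>H\<^esub> p \<otimes>\<^bsub>H\<^esub> x \<noteq> \<one>\<^bsub>H\<^esub>" using False p by auto
    moreover have "inv\<^bsub>H\<^esub> p \<otimes>\<^bsub>H\<^esub> inv\<^bsub>H\<^esub> h \<noteq> \<one>\<^bsub>H\<^esub>"
    proof
      assume "inv\<^bsub>H\<^esub> p \<otimes>\<^bsub>H\<^esub> inv\<^bsub>H\<^esub> h = \<one>\<^bsub>H\<^esub>"
      then have "inv\<^bsub>H\<^esub> h = p" using H.inv_solve_left'[OF H.one_closed pc] h pc by simp
      then have "h = inv\<^bsub>H\<^esub> p" using h by (metis H.inv_inv)
      then show False using h p by blast
    qed
    ultimately show "inv\<^bsub>H\<^esub> p \<otimes>\<^bsub>H\<^esub> x = \<one>\<^bsub>H\<^esub> \<longleftrightarrow> inv\<^bsub>H\<^esub> p \<otimes>\<^bsub>H\<^esub> inv\<^bsub>H\<^esub> h = \<one>\<^bsub>H\<^esub>" by simp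
    have ip: "inv\<^bsub>H\<^esub> p \<in> m_inv H ` PP N" using p by blast
    have "inv\<^bsub>H\<^esub> p \<otimes>\<^bsub>H\<^esub> inv\<^bsub>H\<^esub> h \<in> S1 \<longleftrightarrow> inv\<^bsub>H\<^esub> p \<in> S1 #>\<^bsub>H\<^esub> h"
      using H.rcos_mem[OF S1c _ h(1), of "inv\<^bsub>H\<^esub> p"] pc by simp
    also have "\<dots> \<longleftrightarrow> inv\<^bsub>H\<^esub> p \<in> T"
    proof -
      have "inv\<^bsub>H\<^esub> p \<in> (S1 #>\<^bsub>H\<^esub> h) \<inter> m_inv H ` PP N \<longleftrightarrow> inv\<^bsub>H\<^esub> p \<in> T \<inter> m_inv H ` PP N"
        using h(3) by simp
      then show ?thesis using ip by simp
    qed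
    also have "\<dots> \<longleftrightarrow> inv\<^bsub>H\<^esub> p \<otimes>\<^bsub>H\<^esub> x \<in> S2" using pc by (simp add: T_def)
    finally show "inv\<^bsub>H\<^esub> p \<otimes>\<^bsub>H\<^esub> x \<in> S2 \<longleftrightarrow> inv\<^bsub>H\<^esub> p \<otimes>\<^bsub>H\<^esub> inv\<^bsub>H\<^esub> h \<in> S1" by simp
  qed
qed

lemma wr_transfer:
  assumes inf: "infinite (carrier H)" and S1: "S1 \<in> D_R H" and S2: "S2 \<in> D_R H"
    and eqF: "S1 \<inter> FF N = S2 \<inter> FF N"
    and w1: "w1 \<in> words (n + 2) N" and w2: "w2 \<in> words (n + 2) N"
    and eq: "ev W (Y S1) w1 = ev W (Y S1) w2"
  shows "ev W (Y S2) w1 = ev W (Y S2) w2"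
proof -
  have v1: "\<forall>l\<in>set w1. fst l < n + 2" using w1 by (simp add: words_def)
  have v2: "\<forall>l\<in>set w2. fst l < n + 2" using w2 by (simp add: words_def)
  have pt: "fst (ev W (Y S2) w) x = fst (ev W (Y S1) w) x'"
    if w: "w \<in> words (n + 2) N" and x: "x \<in> carrier H" and x': "x' \<in> carrier H"
     and c: "\<forall>p\<in>PP N. (inv\<^bsub>H\<^esub> p \<otimes>\<^bsub>H\<^esub> x = \<one>\<^bsub>H\<^esub> \<longleftrightarrow> inv\<^bsub>H\<^esub> p \<otimes>\<^bsub>H\<^esub> x' = \<one>\<^bsub>H\<^esub>)
      \<and> (inv\<^bsub>H\<^esub> p \<otimes>\<^bsub>H\<^esub> x \<in> S2 \<longleftrightarrow> inv\<^bsub>H\<^esub> p \<otimes>\<^bsub>H\<^esub> x' \<in> S1)" for w x x'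
  proof (rule transfer_L)
    show "\<forall>l\<in>set w. fst l < n + 2" using w by (simp add: words_def)
    have "hpos (take k w) \<in> PP N" for k unfolding PP_def using take_words[OF w] by blast
    then show "\<forall>k\<le>length w. (inv\<^bsub>H\<^esub> hpos (take k w) \<otimes>\<^bsub>H\<^esub> x = \<one>\<^bsub>H\<^esub> \<longleftrightarrow> inv\<^bsub>H\<^esub> hpos (take k w) \<otimes>\<^bsub>H\<^esub> x' = \<one>\<^bsub>H\<^esub>)
       \<and> (inv\<^bsub>H\<^esub> hpos (take k w) \<otimes>\<^bsub>H\<^esub> x \<in> S2 \<longleftrightarrow> inv\<^bsub>H\<^esub> hpos (take k w) \<otimes>\<^bsub>H\<^esub> x' \<in> S1)"
      using c by blast
  qed (use x x' in auto)
  obtain f1 where f1: "ev W (Y S2) w1 = (f1, hpos w1)" "ev W (Y S2) w1 \<in> carrier W" using evW[OF v1] by blast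
  obtain f2 where f2: "ev W (Y S2) w2 = (f2, hpos w2)" "ev W (Y S2) w2 \<in> carrier W" using evW[OF v2] by blast
  obtain g1 where g1: "ev W (Y S1) w1 = (g1, hpos w1)" using evW[OF v1] by blast
  obtain g2 where g2: "ev W (Y S1) w2 = (g2, hpos w2)" using evW[OF v2] by blast
  have hh: "hpos w1 = hpos w2" and gg: "g1 = g2" using eq g1 g2 by auto
  have f1c: "f1 \<in> carrier H \<rightarrow>\<^sub>E carrier B" using f1 by (simp add: W_carrier)
  have f2c: "f2 \<in> carrier H \<rightarrow>\<^sub>E carrier B" using f2 by (simp add: W_carrier)
  have "f1 = f2"
  proof (rule PiE_ext[OF f1c f2c])
    fix x assume x: "x \<in> carrier H"
    obtain x' where x': "x' \<in> carrier H" and c: "\<forall>p\<in>PP N. (inv\<^bsub>H\<^esub> p \<otimes>\<^bsub>H\<^esub> x = \<one>\<^bsub>H\<^esub> \<longleftrightarrow> inv\<^bsub>H\<^esub> p \<otimes>\<^bsub>H\<^esub> x' = \<one>\<^bsub>H\<^esub>)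
      \<and> (inv\<^bsub>H\<^esub> p \<otimes>\<^bsub>H\<^esub> x \<in> S2 \<longleftrightarrow> inv\<^bsub>H\<^esub> p \<otimes>\<^bsub>H\<^esub> x' \<in> S1)"
      using key_point[OF inf S1 S2 eqF x] by blast
    have "f1 x = g1 x'" using pt[OF w1 x x' c] f1 g1 by simp
    moreover have "f2 x = g2 x'" using pt[OF w2 x x' c] f2 g2 by simp
    ultimately show "f1 x = f2 x" using gg by simp
  qed
  then show ?thesis using f1 f2 hh by simp
qed

end

theorem corollary3p6:
  fixes B :: "('b, 'c) monoid_scheme" and H :: "('h, 'd) monoid_scheme"
    and xs :: "'h list" and a b :: 'b
  assumes "group B" and "group H"
    and "\<not> comm_group B"
    and "set xs \<subseteq> carrier H" and "generate H (set xs) = carrier H"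
    and "infinite (carrier H)"
    and "a \<in> carrier B" and "b \<in> carrier B" and "a \<otimes>\<^bsub>B\<^esub> b \<noteq> b \<otimes>\<^bsub>B\<^esub> a"
  shows "\<forall>S\<in>D_R H. \<forall>r::nat. \<exists>F. finite F \<and> F \<subseteq> carrier H \<and>
           (\<forall>S'\<in>D_R H. S' \<inter> F = S \<inter> F \<longrightarrow>
              marked_ball_iso (Gsub B H a b S') (Ymark B H xs a b S')
                              (Gsub B H a b S) (Ymark B H xs a b S) r)"
proof (intro ballI allI)
  fix S r assume S: "S \<in> D_R H"
  interpret wr3 B H xs a b
    by (intro wr3.intro wr2.intro wr3_axioms.intro assms)
  show "\<exists>F. finite F \<and> F \<subseteq> carrier H \<and>
           (\<forall>S'\<in>D_R H. S' \<inter> F = S \<inter> F \<longrightarrow>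
              marked_ball_iso (Gsub B H a b S') (Ymark B H xs a b S')
                              (Gsub B H a b S) (Ymark B H xs a b S) r)"
  proof (intro exI conjI ballI impI)
    show "finite (FF (Suc r))" by (rule FF_finite)
    show "FF (Suc r) \<subseteq> carrier H" by (rule FF_carrier)
    fix S' assume S': "S' \<in> D_R H" and eq: "S' \<inter> FF (Suc r) = S \<inter> FF (Suc r)"
    show "marked_ball_iso (Gsub B H a b S') (Ymark B H xs a b S') (Gsub B H a b S) (Ymark B H xs a b S) r"
    proof (rule iso_from_words)
      show "length (Ymark B H xs a b S') = length (Ymark B H xs a b S)" by simp
      fix w1 w2 assume w1: "w1 \<in> words (length (Ymark B H xs a b S')) (Suc r)"
        and w2: "w2 \<in> words (length (Ymark B H xs a b S')) (Suc r)"
      have w1': "w1 \<in> words (n + 2) (Suc r)" using w1 by simp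
      have w2': "w2 \<in> words (n + 2) (Suc r)" using w2 by simp
      have v1: "\<forall>l\<in>set w1. fst l < n + 2" using w1' by (simp add: words_def)
      have v2: "\<forall>l\<in>set w2. fst l < n + 2" using w2' by (simp add: words_def)
      show "ev (Gsub B H a b S') (Ymark B H xs a b S') w1 = ev (Gsub B H a b S') (Ymark B H xs a b S') w2 \<longleftrightarrow>
            ev (Gsub B H a b S) (Ymark B H xs a b S) w1 = ev (Gsub B H a b S) (Ymark B H xs a b S) w2"
        unfolding ev_Gsub[OF v1] ev_Gsub[OF v2]
        using wr_transfer[OF assms(6) S' S eq w1' w2'] wr_transfer[OF assms(6) S S' eq[symmetric] w1' w2']
        by blast
    qed
  qed
qed

end
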